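(* Let $d\ge 1$, $T\ge 1$, let $\mathcal{X}\subseteq\mathbb{R}^d$ be a non-empty closed convex set, and let $0<\mu\le L$. Let $f_1,\dots,f_T:\mathcal{X}\to[0,\infty)$ be differentiable with $\frac{\mu}{2}\|y-x\|^2\le f_t(y)-f_t(x)-\langle\nabla f_t(x),y-x\rangle\le\frac{L}{2}\|y-x\|^2$ for all $t$ and $x,y\in\mathcal{X}$. Let $x_1,\dots,x_T$ be the iterates of the OMGD algorithm with $K=\lceil\frac{L+\mu}{2\mu}\ln4\rceil$ from a starting point $x_0\in\mathcal{X}$. Then for any $\alpha>0$, $$\sum_{t=1}^T f_t(x_t)\le\sum_{t=1}^T f_t(x_t^\star)+\frac{1}{2\alpha}\sum_{t=1}^T\|\nabla f_t(x_t^\star)\|^2+(L+\alpha)\big(\|x_1-x_1^\star\|^2+2\mathcal{P}_{2,T}^\star\big).$$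
   Context: $x_t^\star=\arg\min_{x\in\mathcal{X}}f_t(x)$ and $\mathcal{P}_{2,T}^\star=\sum_{t=2}^T\|x_t^\star-x_{t-1}^\star\|^2$. OMGD with parameter $K$: $x_1=x_0$; for $t=2,\dots,T$, $z_t^{(0)}=x_{t-1}$, $z_t^{(k)}=\Pi_{\mathcal{X}}\big(z_t^{(k-1)}-\frac1L\nabla f_{t-1}(z_t^{(k-1)})\big)$ ($k=1,\dots,K$), $x_t=z_t^{(K)}$, where $\Pi_{\mathcal{X}}$ is Euclidean projection onto $\mathcal{X}$. *)

theory Defs
  imports "HOL-Analysis.Analysis"
begin

definition gd_step :: "'a::euclidean_space set \<Rightarrow> real \<Rightarrow> ('a \<Rightarrow> 'a) \<Rightarrow> 'a \<Rightarrow> 'a" where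
  "gd_step X L gr z = closest_point X (z - (1 / L) *\<^sub>R gr z)"

text \<open>OMGD iterates: omgd X L g K x0 t is x_t; index 0 is x_0, x_1 = x_0, and
  x_t = K projected gradient steps on f_(t-1) started from x_(t-1), for t >= 2.\<close>
fun omgd :: "'a::euclidean_space set \<Rightarrow> real \<Rightarrow> (nat \<Rightarrow> 'a \<Rightarrow> 'a) \<Rightarrow> nat \<Rightarrow> 'a \<Rightarrow> nat \<Rightarrow> 'a" where
  "omgd X L g K x0 0 = x0"
| "omgd X L g K x0 (Suc 0) = x0"
| "omgd X L g K x0 (Suc (Suc n)) = (gd_step X L (g (Suc n)) ^^ K) (omgd X L g K x0 (Suc n))"

end

theory Submission
  imports Defs
begin

lemma opt_ineq:
  fixes X :: "'a::euclidean_space set" and F :: "'a \<Rightarrow> real"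
  assumes "convex X" "xs \<in> X" "y \<in> X" "\<forall>y\<in>X. F xs \<le> F y" "L > 0"
    and up: "\<And>y. y \<in> X \<Longrightarrow> F y - F xs - G \<bullet> (y - xs) \<le> L / 2 * (norm (y - xs))\<^sup>2"
  shows "G \<bullet> (y - xs) \<ge> 0"
proof (rule ccontr)
  assume "\<not> ?thesis"
  then have c: "G \<bullet> (y - xs) < 0" by simp
  define c where "c = G \<bullet> (y - xs)"
  define n where "n = (norm (y - xs))\<^sup>2"
  have "y \<noteq> xs" using c by auto
  then have n: "n > 0" unfolding n_def by simp
  define s where "s = min 1 (- c / (L * n))"
  have s0: "s > 0" using c n assms(5) unfolding s_def c_def by (auto simp: field_simps)
  have s1: "s \<le> 1" unfolding s_def by simp
  have Ln: "L * n > 0" using n assms(5) by simp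
  have "s \<le> - c / (L * n)" unfolding s_def by simp
  then have "s * (L * n) \<le> (- c / (L * n)) * (L * n)" by (rule mult_right_mono) (use Ln in simp)
  also have "\<dots> = - c" using n assms(5) by simp
  finally have sle: "s * (L * n) \<le> - c" .
  have ys: "xs + s *\<^sub>R (y - xs) \<in> X"
    using convexD_alt[OF assms(1) assms(2) assms(3), of s] s0 s1
    by (simp add: algebra_simps)
  have "F (xs + s *\<^sub>R (y - xs)) - F xs - G \<bullet> (s *\<^sub>R (y - xs)) \<le> L / 2 * (norm (s *\<^sub>R (y - xs)))\<^sup>2"
    using up[OF ys] by simp
  moreover have "F xs \<le> F (xs + s *\<^sub>R (y - xs))" using assms(4) ys by blast
  ultimately have "- s * c \<le> L / 2 * s\<^sup>2 * n"
    unfolding c_def n_def by (simp add: power_mult_distrib)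
  then have "s * (- c) \<le> s * (L / 2 * s * n)" by (simp add: power2_eq_square algebra_simps)
  then have h: "- c \<le> L / 2 * s * n" using s0 by (metis mult_le_cancel_left_pos)
  have "L / 2 * s * n = s * (L * n) / 2" by simp
  then show False using h sle c unfolding c_def by linarith
qed


lemma step_contract:
  fixes X :: "'a::euclidean_space set" and F :: "'a \<Rightarrow> real" and G :: "'a \<Rightarrow> 'a"
  assumes cx: "convex X" and cl: "closed X" and ne: "X \<noteq> {}" and mu: "0 < \<mu>" "\<mu> \<le> L"
    and z: "z \<in> X" and xs: "xs \<in> X" and opt: "G xs \<bullet> (p - xs) \<ge> 0"
    and p: "p = gd_step X L G z"
    and lower: "\<And>x y. x \<in> X \<Longrightarrow> y \<in> X \<Longrightarrow> \<mu> / 2 * (norm (y - x))\<^sup>2 \<le> F y - F x - G x \<bullet> (y - x)"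
    and upper: "\<And>x y. x \<in> X \<Longrightarrow> y \<in> X \<Longrightarrow> F y - F x - G x \<bullet> (y - x) \<le> L / 2 * (norm (y - x))\<^sup>2"
  shows "(L + \<mu>) * (norm (p - xs))\<^sup>2 \<le> (L - \<mu>) * (norm (z - xs))\<^sup>2"
proof -
  define w where "w = z - (1 / L) *\<^sub>R G z"
  have pw: "p = closest_point X w" using p unfolding gd_step_def w_def by simp
  have pX: "p \<in> X" using pw closest_point_in_set[OF cl ne] by simp
  have proj: "(w - p) \<bullet> (xs - p) \<le> 0" using closest_point_dot[OF cx cl xs] pw by simp
  define a where "a = z - p"
  define b where "b = p - xs"
  define c where "c = w - p"
  have L0: "L > 0" using mu by simp
  have Gz: "G z = L *\<^sub>R (a - c)" unfolding a_def c_def w_def using L0 by (simp add: algebra_simps)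
  have zxs: "z - xs = a + b" unfolding a_def b_def by simp
  have u1: "F p - F z + L * ((a - c) \<bullet> a) \<le> L / 2 * (a \<bullet> a)"
    using upper[OF z pX] Gz unfolding a_def by (simp add: power2_norm_eq_inner inner_commute algebra_simps)
  have l1: "\<mu> / 2 * ((a + b) \<bullet> (a + b)) \<le> F xs - F z + L * ((a - c) \<bullet> (a + b))"
  proof -
    have "xs - z = - (a + b)" using zxs by (simp add: algebra_simps)
    then have "norm (xs - z) = norm (a + b)" by (metis norm_minus_cancel)
    moreover have "G z \<bullet> (xs - z) = - (L * ((a - c) \<bullet> (a + b)))"
      unfolding Gz \<open>xs - z = - (a + b)\<close> inner_minus_right inner_scaleR_left by simp
    ultimately show ?thesis using lower[OF z xs] by (simp add: power2_norm_eq_inner)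
  qed
  have l2: "\<mu> / 2 * (b \<bullet> b) \<le> F p - F xs"
    using lower[OF xs pX] opt unfolding b_def by (simp add: power2_norm_eq_inner)
  have cb: "c \<bullet> b \<ge> 0" using proj unfolding c_def b_def
    by (metis inner_minus_right minus_diff_eq neg_0_le_iff_le)
  have cb2: "L * (c \<bullet> b) \<ge> 0" using cb L0 by simp
  have e1: "(a + b) \<bullet> (a + b) = a \<bullet> a + 2 * (a \<bullet> b) + b \<bullet> b"
    by (simp add: inner_add_left inner_add_right inner_commute)
  have e2: "L * ((a - c) \<bullet> a) = L * (a \<bullet> a) - L * (c \<bullet> a)" by (simp add: inner_diff_left algebra_simps)
  have e3: "L * ((a - c) \<bullet> (a + b)) = L * (a \<bullet> a) + L * (a \<bullet> b) - L * (c \<bullet> a) - L * (c \<bullet> b)"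
    by (simp add: inner_diff_left inner_add_right algebra_simps)
  have "(L + \<mu>) * (b \<bullet> b) \<le> (L - \<mu>) * ((a + b) \<bullet> (a + b))"
    using u1 l1 l2 cb2 e2 e3 unfolding e1 by (simp add: algebra_simps)
  then have "(L + \<mu>) * (b \<bullet> b) \<le> (L - \<mu>) * ((z - xs) \<bullet> (z - xs))" by (simp only: zxs)
  then show ?thesis unfolding b_def by (simp add: power2_norm_eq_inner)
qed


lemma funpow_in:
  assumes "closed X" "X \<noteq> {}" "z \<in> X"
  shows "((gd_step X L G) ^^ k) z \<in> X"
proof (cases k)
  case 0 then show ?thesis using assms by simp
next
  case (Suc n) then show ?thesis using closest_point_in_set[OF assms(1,2)] by (simp add: gd_step_def)
qed

lemma iter_contract:
  fixes X :: "'a::euclidean_space set" and F :: "'a \<Rightarrow> real" and G :: "'a \<Rightarrow> 'a"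
  assumes cx: "convex X" and cl: "closed X" and ne: "X \<noteq> {}" and mu: "0 < \<mu>" "\<mu> \<le> L"
    and z: "z \<in> X" and xs: "xs \<in> X" and mn: "\<forall>y\<in>X. F xs \<le> F y"
    and lower: "\<And>x y. x \<in> X \<Longrightarrow> y \<in> X \<Longrightarrow> \<mu> / 2 * (norm (y - x))\<^sup>2 \<le> F y - F x - G x \<bullet> (y - x)"
    and upper: "\<And>x y. x \<in> X \<Longrightarrow> y \<in> X \<Longrightarrow> F y - F x - G x \<bullet> (y - x) \<le> L / 2 * (norm (y - x))\<^sup>2"
  shows "(norm (((gd_step X L G) ^^ k) z - xs))\<^sup>2 \<le> ((L - \<mu>) / (L + \<mu>)) ^ k * (norm (z - xs))\<^sup>2"
proof (induction k)
  case 0 then show ?case by simp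
next
  case (Suc k)
  define q where "q = ((gd_step X L G) ^^ k) z"
  have qX: "q \<in> X" unfolding q_def by (rule funpow_in[OF cl ne z])
  define p where "p = gd_step X L G q"
  have pX: "p \<in> X" unfolding p_def gd_step_def using closest_point_in_set[OF cl ne] by simp
  have opt: "G xs \<bullet> (p - xs) \<ge> 0"
    by (rule opt_ineq[OF cx xs pX mn, of L]) (use mu upper[OF xs] in auto)
  have c: "(L + \<mu>) * (norm (p - xs))\<^sup>2 \<le> (L - \<mu>) * (norm (q - xs))\<^sup>2"
    by (rule step_contract[OF cx cl ne mu qX xs opt p_def lower upper])
  have pos: "L + \<mu> > 0" using mu by simp
  have "(norm (p - xs))\<^sup>2 \<le> (L - \<mu>) / (L + \<mu>) * (norm (q - xs))\<^sup>2"
    using c pos by (simp add: field_simps)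
  also have "\<dots> \<le> (L - \<mu>) / (L + \<mu>) * (((L - \<mu>) / (L + \<mu>)) ^ k * (norm (z - xs))\<^sup>2)"
    using Suc.IH mu unfolding q_def by (intro mult_left_mono) auto
  finally show ?case unfolding p_def q_def by (simp add: mult.assoc)
qed

lemma rate_bound:
  assumes "0 < \<mu>" "\<mu> \<le> L" "real K \<ge> (L + \<mu>) / (2 * \<mu>) * ln 4"
  shows "((L - \<mu>) / (L + \<mu>)) ^ K \<le> 1 / 4"
proof -
  have pos: "L + \<mu> > 0" using assms by simp
  define r where "r = (L - \<mu>) / (L + \<mu>)"
  have r0: "r \<ge> 0" unfolding r_def using assms by simp
  have "r = 1 + (- 2 * \<mu> / (L + \<mu>))" unfolding r_def using pos by (simp add: field_simps)
  also have "\<dots> \<le> exp (- 2 * \<mu> / (L + \<mu>))" by (rule exp_ge_add_one_self)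
  finally have "r ^ K \<le> exp (- 2 * \<mu> / (L + \<mu>)) ^ K" using r0 by (intro power_mono) auto
  also have "\<dots> = exp (- (2 * \<mu> * real K / (L + \<mu>)))" by (simp add: exp_of_nat_mult[symmetric])
  also have "\<dots> \<le> exp (- ln 4)"
  proof -
    have "ln 4 \<le> 2 * \<mu> * real K / (L + \<mu>)"
      using assms(3) pos assms(1) by (simp add: field_simps)
    then show ?thesis by simp
  qed
  also have "\<dots> = 1 / 4" by (simp add: exp_minus)
  finally show ?thesis unfolding r_def .
qed

lemma seq_sum:
  fixes a p :: "nat \<Rightarrow> real"
  assumes "\<And>t. 2 \<le> t \<Longrightarrow> t \<le> n \<Longrightarrow> a t \<le> a (t - 1) / 2 + 2 * p t" "n \<ge> 1"
  shows "(\<Sum>t=1..n. a t) + a n \<le> 2 * a 1 + 4 * (\<Sum>t=2..n. p t)"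
  using assms
proof (induction n)
  case 0 then show ?case by simp
next
  case (Suc n)
  show ?case
  proof (cases "n = 0")
    case True then show ?thesis by simp
  next
    case False
    have IH: "(\<Sum>t=1..n. a t) + a n \<le> 2 * a 1 + 4 * (\<Sum>t=2..n. p t)"
      using Suc.IH Suc.prems False by auto
    have st: "a (Suc n) \<le> a n / 2 + 2 * p (Suc n)" using Suc.prems(1)[of "Suc n"] False by simp
    have s1: "(\<Sum>t=1..Suc n. a t) = (\<Sum>t=1..n. a t) + a (Suc n)" by simp
    have s2: "(\<Sum>t=2..Suc n. p t) = (\<Sum>t=2..n. p t) + p (Suc n)" using False by simp
    show ?thesis unfolding s1 s2 using IH st by simp
  qed
qed


theorem lemma2:
  fixes X :: "'a::euclidean_space set"
    and f :: "nat \<Rightarrow> 'a \<Rightarrow> real"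
    and g :: "nat \<Rightarrow> 'a \<Rightarrow> 'a"
    and xs :: "nat \<Rightarrow> 'a"
    and x0 :: 'a
    and \<mu> L \<alpha> :: real
    and T :: nat
  assumes "T \<ge> 1"
    and "X \<noteq> {}" and "closed X" and "convex X"
    and "0 < \<mu>" and "\<mu> \<le> L"
    and nonneg: "\<And>t x. t \<in> {1..T} \<Longrightarrow> x \<in> X \<Longrightarrow> f t x \<ge> 0"
    and deriv: "\<And>t x. t \<in> {1..T} \<Longrightarrow> x \<in> X \<Longrightarrow>
                 (f t has_derivative (\<lambda>h. g t x \<bullet> h)) (at x within X)"
    and lower: "\<And>t x y. t \<in> {1..T} \<Longrightarrow> x \<in> X \<Longrightarrow> y \<in> X \<Longrightarrow>
                 \<mu> / 2 * (norm (y - x))\<^sup>2 \<le> f t y - f t x - g t x \<bullet> (y - x)"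
    and upper: "\<And>t x y. t \<in> {1..T} \<Longrightarrow> x \<in> X \<Longrightarrow> y \<in> X \<Longrightarrow>
                 f t y - f t x - g t x \<bullet> (y - x) \<le> L / 2 * (norm (y - x))\<^sup>2"
    and xs_min: "\<And>t. t \<in> {1..T} \<Longrightarrow> xs t \<in> X \<and> (\<forall>y\<in>X. f t (xs t) \<le> f t y)"
    and "x0 \<in> X"
    and "\<alpha> > 0"
  shows "(\<Sum>t=1..T. f t (omgd X L g (nat \<lceil>(L + \<mu>) / (2 * \<mu>) * ln 4\<rceil>) x0 t))
         \<le> (\<Sum>t=1..T. f t (xs t)) + 1 / (2 * \<alpha>) * (\<Sum>t=1..T. (norm (g t (xs t)))\<^sup>2)
           + (L + \<alpha>) * ((norm (omgd X L g (nat \<lceil>(L + \<mu>) / (2 * \<mu>) * ln 4\<rceil>) x0 1 - xs 1))\<^sup>2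
                        + 2 * (\<Sum>t=2..T. (norm (xs t - xs (t - 1)))\<^sup>2))"
  proof -
  define K where "K = nat \<lceil>(L + \<mu>) / (2 * \<mu>) * ln 4\<rceil>"
  define x where "x = omgd X L g K x0"
  define a where "a = (\<lambda>t. (norm (x t - xs t))\<^sup>2)"
  define p where "p = (\<lambda>t. (norm (xs t - xs (t - 1)))\<^sup>2)"
  note cl = \<open>closed X\<close> and ne = \<open>X \<noteq> {}\<close> and cx = \<open>convex X\<close>
  note mu = \<open>0 < \<mu>\<close> \<open>\<mu> \<le> L\<close>
  have Kb: "real K \<ge> (L + \<mu>) / (2 * \<mu>) * ln 4" unfolding K_def by linarith
  have rate: "((L - \<mu>) / (L + \<mu>)) ^ K \<le> 1 / 4" by (rule rate_bound[OF mu Kb])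
  have xX: "x t \<in> X" for t
  proof (induction t rule: nat_less_induct)
    case (1 n)
    show ?case
    proof (cases n)
      case 0 then show ?thesis using \<open>x0 \<in> X\<close> unfolding x_def by simp
    next
      case (Suc m)
      show ?thesis
      proof (cases m)
        case 0 then show ?thesis using Suc \<open>x0 \<in> X\<close> unfolding x_def by simp
      next
        case (Suc k)
        have "x (Suc k) \<in> X" using "1" \<open>n = Suc m\<close> Suc by simp
        then show ?thesis using \<open>n = Suc m\<close> Suc funpow_in[OF cl ne] unfolding x_def by simp
      qed
    qed
  qed
  have x1: "x 1 = x0" unfolding x_def by simp
  have contr: "a t \<le> a (t - 1) / 2 + 2 * p t" if t: "2 \<le> t" "t \<le> T" for t
  proof -
    obtain k where k: "t = Suc (Suc k)" using t(1) by (metis add_2_eq_Suc le_Suc_ex)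
    have tm: "Suc k \<in> {1..T}" using t k by simp
    have xt: "x t = (gd_step X L (g (Suc k)) ^^ K) (x (Suc k))" unfolding x_def k by simp
    have xsX: "xs (Suc k) \<in> X" and mn: "\<forall>y\<in>X. f (Suc k) (xs (Suc k)) \<le> f (Suc k) y"
      using xs_min[OF tm] by auto
    have "(norm (x t - xs (Suc k)))\<^sup>2 \<le> ((L - \<mu>) / (L + \<mu>)) ^ K * (norm (x (Suc k) - xs (Suc k)))\<^sup>2"
      unfolding xt
      by (rule iter_contract[OF cx cl ne mu xX xsX mn])
         (use lower[OF tm] upper[OF tm] in auto)
    also have "\<dots> \<le> 1 / 4 * (norm (x (Suc k) - xs (Suc k)))\<^sup>2"
      by (rule mult_right_mono[OF rate]) simp
    finally have c1: "(norm (x t - xs (t - 1)))\<^sup>2 \<le> 1 / 4 * a (t - 1)" unfolding a_def k by simp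
    have tri: "(norm (u + v))\<^sup>2 \<le> 2 * (norm u)\<^sup>2 + 2 * (norm v)\<^sup>2" for u v :: 'a
    proof -
      have "0 \<le> (norm (u - v))\<^sup>2" by simp
      then show ?thesis
        by (simp add: power2_norm_eq_inner inner_add_left inner_add_right inner_diff_left inner_diff_right inner_commute)
    qed
    have "x t - xs t = (x t - xs (t - 1)) + (- (xs t - xs (t - 1)))" by simp
    then have "a t \<le> 2 * (norm (x t - xs (t - 1)))\<^sup>2 + 2 * p t"
      unfolding a_def p_def using tri[of "x t - xs (t - 1)" "- (xs t - xs (t - 1))"] by (simp add: norm_minus_commute)
    then show ?thesis using c1 by simp
  qed
  have S: "(\<Sum>t=1..T. a t) + a T \<le> 2 * a 1 + 4 * (\<Sum>t=2..T. p t)"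
    by (rule seq_sum) (use contr \<open>T \<ge> 1\<close> in auto)
  have aT: "a T \<ge> 0" unfolding a_def by simp
  have pert: "f t (x t) \<le> f t (xs t) + 1 / (2 * \<alpha>) * (norm (g t (xs t)))\<^sup>2 + (L + \<alpha>) / 2 * a t"
    if t: "t \<in> {1..T}" for t
  proof -
    have xsX: "xs t \<in> X" using xs_min[OF t] by auto
    define d where "d = x t - xs t"
    define G where "G = g t (xs t)"
    have u: "f t (x t) - f t (xs t) - G \<bullet> d \<le> L / 2 * (norm d)\<^sup>2"
      using upper[OF t xsX xX] unfolding d_def G_def by simp
    have "0 \<le> (G - \<alpha> *\<^sub>R d) \<bullet> (G - \<alpha> *\<^sub>R d)" by simp
    also have "\<dots> = G \<bullet> G - 2 * \<alpha> * (G \<bullet> d) + \<alpha>\<^sup>2 * (d \<bullet> d)"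
      by (simp add: inner_diff_left inner_diff_right inner_commute power2_eq_square algebra_simps)
    finally have "0 \<le> (norm G)\<^sup>2 - 2 * \<alpha> * (G \<bullet> d) + \<alpha>\<^sup>2 * (norm d)\<^sup>2"
      by (simp only: power2_norm_eq_inner)
    then have "G \<bullet> d \<le> 1 / (2 * \<alpha>) * (norm G)\<^sup>2 + \<alpha> / 2 * (norm d)\<^sup>2"
      using \<open>\<alpha> > 0\<close> by (simp add: field_simps power2_eq_square)
    then have gd: "G \<bullet> d \<le> 1 / (2 * \<alpha>) * (norm G)\<^sup>2 + \<alpha> / 2 * (norm d)\<^sup>2" .
    have e: "(L + \<alpha>) / 2 * (norm d)\<^sup>2 = L / 2 * (norm d)\<^sup>2 + \<alpha> / 2 * (norm d)\<^sup>2"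
      by (simp add: field_simps)
    have "f t (x t) \<le> f t (xs t) + 1 / (2 * \<alpha>) * (norm G)\<^sup>2 + (L + \<alpha>) / 2 * (norm d)\<^sup>2"
      using u gd e by linarith
    then show ?thesis unfolding a_def d_def G_def .
  qed
  have "(\<Sum>t=1..T. f t (x t)) \<le> (\<Sum>t=1..T. f t (xs t) + 1 / (2 * \<alpha>) * (norm (g t (xs t)))\<^sup>2 + (L + \<alpha>) / 2 * a t)"
    by (rule sum_mono) (use pert in auto)
  also have "\<dots> = (\<Sum>t=1..T. f t (xs t)) + 1 / (2 * \<alpha>) * (\<Sum>t=1..T. (norm (g t (xs t)))\<^sup>2) + (L + \<alpha>) / 2 * (\<Sum>t=1..T. a t)"
    by (simp add: sum.distrib sum_distrib_left)
  also have "\<dots> \<le> (\<Sum>t=1..T. f t (xs t)) + 1 / (2 * \<alpha>) * (\<Sum>t=1..T. (norm (g t (xs t)))\<^sup>2) + (L + \<alpha>) * (a 1 + 2 * (\<Sum>t=2..T. p t))"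
  proof -
    have "(\<Sum>t=1..T. a t) \<le> 2 * (a 1 + 2 * (\<Sum>t=2..T. p t))" using S aT by simp
    moreover have "L + \<alpha> > 0" using mu \<open>\<alpha> > 0\<close> by simp
    ultimately have "(L + \<alpha>) / 2 * (\<Sum>t=1..T. a t) \<le> (L + \<alpha>) / 2 * (2 * (a 1 + 2 * (\<Sum>t=2..T. p t)))"
      by (intro mult_left_mono) auto
    also have "\<dots> = (L + \<alpha>) * (a 1 + 2 * (\<Sum>t=2..T. p t))" by simp
    finally show ?thesis by simp
  qed
  finally show ?thesis unfolding a_def p_def x_def[symmetric] K_def[symmetric] using x1 by simp
qed

end
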